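(* Let $q,m$ be positive integers with $q\ge 2$. Let $\mathbf{A}^{q,m}=[a_{j,k}]$ be the $q^m\times q(m+1)$ array with rows indexed by $j\in[0,q^m)$ and columns by $k\in[0,q(m+1))$, defined as follows. Write $j=(j_{m-1},\dots,j_0)_q$ and $k=uq+v$ with $0\le u\le m$, $0\le v<q$. If $0\le u<m$: $$a_{j,k}=\begin{cases} *, & j_u=v,\\ (j_u-v-1,\ j_{m-1},\dots,j_{u+1},\ v,\ j_{u-1},\dots,j_0)_q, & j_u\ne v.\end{cases}$$ If $u=m$: $$a_{j,k}=\begin{cases} *, & j_0+\cdots+j_{m-1}=v,\\ (v-\textstyle\sum_{l=0}^{m-1}j_l-1,\ j_{m-1},\dots,j_0)_q, & j_0+\cdots+j_{m-1}\ne v,\end{cases}$$ where all additions and subtractions of digits (including in the conditions) are performed modulo $q$ (with results in $[0,q)$). Then $\mathbf{A}^{q,m}$ is an $(m+1)$-regular $(q(m+1),\,q^m,\,q^{m-1},\,q^{m+1}-q^m)$ PDA, and its rate $S/F$ equals $q-1$.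
   Context: Notation: $[i,j)=\{i,\dots,j-1\}$. For an integer $s$ with $s=\sum_{l=0}^{n-1}s_lq^l$, $s_l\in[0,q)$, we write $s=(s_{n-1},\dots,s_0)_q$ (the $q$-ary representation; the leftmost digit is most significant). For positive integers $K,F,Z,S$ and an integer $g$, an $F\times K$ array $\mathbf{P}=[p_{j,k}]$ whose entries are either a special symbol $*$ or one of the integers $0,1,\dots,S-1$ is a $g$-regular $(K,F,Z,S)$ PDA if: (C1) the symbol $*$ appears exactly $Z$ times in each column; (C2') each integer in $[0,S)$ appears exactly $g$ times in $\mathbf{P}$; (C3) for any two distinct entries with $p_{j_1,k_1}=p_{j_2,k_2}=s$ an integer, we have $j_1\neq j_2$, $k_1\neq k_2$, and $p_{j_1,k_2}=p_{j_2,k_1}=*$. The rate of such a PDA (i.e. of its associated caching scheme) is $R=S/F$. *)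

theory Defs
  imports Complex_Main
begin

text \<open>An F x K array with entries in {*} \<union> nat is modelled as a function
  P :: nat \<Rightarrow> nat \<Rightarrow> nat option, rows j < F, columns k < K;
  None represents the symbol *, Some s the integer s.\<close>

definition is_regular_PDA ::
  "nat \<Rightarrow> nat \<Rightarrow> nat \<Rightarrow> nat \<Rightarrow> nat \<Rightarrow> (nat \<Rightarrow> nat \<Rightarrow> nat option) \<Rightarrow> bool" where
  "is_regular_PDA g K F Z S P \<longleftrightarrow>
     0 < K \<and> 0 < F \<and> 0 < Z \<and> 0 < S \<and>
     (\<forall>j<F. \<forall>k<K. \<forall>s. P j k = Some s \<longrightarrow> s < S) \<and>
     (\<forall>k<K. card {j. j < F \<and> P j k = None} = Z) \<and>
     (\<forall>s<S. card {(j, k). j < F \<and> k < K \<and> P j k = Some s} = g) \<and>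
     (\<forall>j1<F. \<forall>k1<K. \<forall>j2<F. \<forall>k2<K. \<forall>s.
        P j1 k1 = Some s \<and> P j2 k2 = Some s \<and> (j1, k1) \<noteq> (j2, k2) \<longrightarrow>
        j1 \<noteq> j2 \<and> k1 \<noteq> k2 \<and> P j1 k2 = None \<and> P j2 k1 = None)"

definition PDA_rate :: "nat \<Rightarrow> nat \<Rightarrow> real" where
  "PDA_rate F S = real S / real F"

definition digit :: "nat \<Rightarrow> nat \<Rightarrow> nat \<Rightarrow> nat" where
  "digit q j l = j div q ^ l mod q"

definition modq :: "nat \<Rightarrow> int \<Rightarrow> nat" where
  "modq q x = nat (x mod int q)"

definition arrA :: "nat \<Rightarrow> nat \<Rightarrow> nat \<Rightarrow> nat \<Rightarrow> nat option" where
  "arrA q m j k =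
     (let u = k div q; v = k mod q in
      if u < m then
        (if digit q j u = v then None
         else Some (modq q (int (digit q j u) - int v - 1) * q ^ m
                    + (\<Sum>l<m. (if l = u then v else digit q j l) * q ^ l)))
      else
        (if modq q (\<Sum>l<m. int (digit q j l)) = v then None
         else Some (modq q (int v - (\<Sum>l<m. int (digit q j l)) - 1) * q ^ m
                    + (\<Sum>l<m. digit q j l * q ^ l))))"

end

theory Submission
  imports Defs
begin


definition enc :: "nat \<Rightarrow> nat \<Rightarrow> (nat \<Rightarrow> nat) \<Rightarrow> nat" where
  "enc q m d = (\<Sum>l<m. d l * q ^ l)"

lemma enc_Suc: "enc q (Suc m) d = d 0 + q * enc q m (\<lambda>l. d (Suc l))"
  unfolding enc_def by (subst sum.lessThan_Suc_shift) (simp add: sum_distrib_left mult_ac)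

lemma digit_Suc: "digit q j (Suc l) = digit q (j div q) l"
  unfolding digit_def by (simp add: div_mult2_eq)

lemma digit_0: "digit q j 0 = j mod q"
  unfolding digit_def by simp

lemma digit_lt: "0 < q \<Longrightarrow> digit q j l < q"
  unfolding digit_def by simp

lemma enc_lt: "(\<And>l. l < m \<Longrightarrow> d l < q) \<Longrightarrow> enc q m d < q ^ m"
proof (induction m arbitrary: d)
  case 0 then show ?case by (simp add: enc_def)
next
  case (Suc m)
  have E: "enc q m (\<lambda>l. d (Suc l)) < q ^ m" using Suc by auto
  have d0: "d 0 < q" using Suc by auto
  have "d 0 + q * enc q m (\<lambda>l. d (Suc l)) < q + q * enc q m (\<lambda>l. d (Suc l))" using d0 by simp
  also have "\<dots> = q * (enc q m (\<lambda>l. d (Suc l)) + 1)" by simp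
  also have "\<dots> \<le> q * q ^ m" using E by (intro mult_le_mono2) simp
  finally show ?case by (simp add: enc_Suc)
qed

lemma enc_digit: "(\<And>l. l < m \<Longrightarrow> d l < q) \<Longrightarrow> l < m \<Longrightarrow> digit q (enc q m d) l = d l"
proof (induction m arbitrary: d l)
  case 0 then show ?case by simp
next
  case (Suc m)
  have d0: "d 0 < q" using Suc by auto
  have q0: "0 < q" using d0 by simp
  show ?case
  proof (cases l)
    case 0 then show ?thesis using d0 by (simp add: enc_Suc digit_0)
  next
    case (Suc l')
    have "(d 0 + q * enc q m (\<lambda>l. d (Suc l))) div q = enc q m (\<lambda>l. d (Suc l))"
      using d0 q0 by simp
    then show ?thesis using Suc Suc.prems Suc.IH[of "\<lambda>l. d (Suc l)" l'] by (simp add: enc_Suc digit_Suc)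
  qed
qed

lemma enc_of_digit: "0 < q \<Longrightarrow> j < q ^ m \<Longrightarrow> enc q m (digit q j) = j"
proof (induction m arbitrary: j)
  case 0 then show ?case by (simp add: enc_def)
next
  case (Suc m)
  have "j div q < q ^ m" using Suc.prems by (simp add: div_less_iff_less_mult mult.commute)
  then have "enc q m (digit q (j div q)) = j div q" using Suc by simp
  then show ?case by (simp add: enc_Suc digit_Suc digit_0)
qed

lemma enc_cong: "(\<And>l. l < m \<Longrightarrow> d l = e l) \<Longrightarrow> enc q m d = enc q m e"
  unfolding enc_def by (rule sum.cong) auto

lemma digit_eq_imp_eq: "0 < q \<Longrightarrow> a < q ^ m \<Longrightarrow> b < q ^ m \<Longrightarrow> (\<And>l. l < m \<Longrightarrow> digit q a l = digit q b l) \<Longrightarrow> a = b"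
  by (metis enc_of_digit enc_cong)

lemma modq_nat: "modq q (int n) = n mod q"
  unfolding modq_def by (simp add: of_nat_mod[symmetric] del: of_nat_mod)

lemma int_modq: "0 < q \<Longrightarrow> int (modq q x) = x mod int q"
  unfolding modq_def by simp

lemma modq_lt: "0 < q \<Longrightarrow> modq q x < q"
  unfolding modq_def by (simp add: nat_less_iff)

lemma mod_neg_small: "-(q::int) \<le> x \<Longrightarrow> x < 0 \<Longrightarrow> x mod q = x + q"
proof -
  assume a: "-(q::int) \<le> x" "x < 0"
  have "x mod q = (x + q) mod q" by simp
  also have "\<dots> = x + q" using a by (intro mod_pos_pos_trivial) auto
  finally show ?thesis .
qed

lemma modq_small: "a < q \<Longrightarrow> b < q \<Longrightarrow> a \<noteq> b \<Longrightarrow> modq q (int a - int b - 1) + 1 < q"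
proof (cases "b < a")
  case True
  assume "a < q" "b < q"
  then have "(int a - int b - 1) mod int q = int a - int b - 1" using True by (intro mod_pos_pos_trivial) auto
  then show ?thesis using True \<open>a<q\<close> unfolding modq_def by simp
next
  case False
  assume "a < q" "b < q" "a \<noteq> b"
  then have "(int a - int b - 1) mod int q = int a - int b - 1 + int q" using False by (intro mod_neg_small) auto
  then show ?thesis using False \<open>a<q\<close> \<open>b<q\<close> \<open>a\<noteq>b\<close> unfolding modq_def by simp
qed

lemma mod_shift_ne: "a < q \<Longrightarrow> t + 1 < q \<Longrightarrow> (a + t + 1) mod q \<noteq> (a::nat)"
proof
  assume h: "a < q" "t + 1 < q" "(a + t + 1) mod q = a"
  show False
  proof (cases "a + t + 1 < q")
    case True then show False using h by simp
  next
    case False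
    then have "(a + t + 1) mod q = a + t + 1 - q" using h
      using h le_mod_geq[of q "a+t+1"] by simp
    then show False using h False by simp
  qed
qed

lemma modq_back: "t < q \<Longrightarrow> modq q (int ((a + t + 1) mod q) - int a - 1) = t"
proof -
  assume "t < q"
  have hh: "int ((a + t + 1) mod q) = (int a + int t + 1) mod int q"
    by (metis of_nat_mod of_nat_add of_nat_1)
  have "(int ((a + t + 1) mod q) - int a - 1) mod int q = ((int a + int t + 1) mod int q - int a - 1) mod int q"
    by (simp only: hh)
  also have "\<dots> = (int a + int t + 1 - int a - 1) mod int q" by (metis diff_diff_eq mod_diff_left_eq)
  also have "\<dots> = int t" using \<open>t<q\<close> by simp
  finally show ?thesis unfolding modq_def by simp
qed

lemma modq_fwd: "a < q \<Longrightarrow> (b + modq q (int a - int b - 1) + 1) mod q = a"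
proof -
  assume a: "a < q"
  then have q0: "0 < q" by simp
  have "int ((b + modq q (int a - int b - 1) + 1) mod q) = (int b + (int a - int b - 1) mod int q + 1) mod int q"
    using int_modq[OF q0] by (simp add: of_nat_mod ac_simps)
  also have "\<dots> = int a mod int q"
  proof -
    have e: "((int a - int b - 1) mod int q + (int b + 1)) mod int q = int a mod int q"
      using mod_add_left_eq[of "int a - int b - 1" "int q" "int b + 1"] by simp
    then show ?thesis by (simp add: ac_simps)
  qed
  also have "\<dots> = int a" using a by simp
  finally show ?thesis by simp
qed

lemma arrA_uv: "v < q \<Longrightarrow> arrA q m j (u * q + v) =
     (if u < m then
        (if digit q j u = v then None
         else Some (modq q (int (digit q j u) - int v - 1) * q ^ m
                    + enc q m (\<lambda>l. if l = u then v else digit q j l)))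
      else
        (if modq q (int (\<Sum>l<m. digit q j l)) = v then None
         else Some (modq q (int v - int (\<Sum>l<m. digit q j l) - 1) * q ^ m
                    + enc q m (digit q j))))"
proof -
  assume v: "v < q"
  have 1: "(u * q + v) div q = u" using v by simp
  have 2: "(u * q + v) mod q = v" using v by simp
  show ?thesis unfolding arrA_def enc_def Let_def 1 2 by simp
qed



definition tt :: "nat \<Rightarrow> nat \<Rightarrow> nat \<Rightarrow> nat" where "tt q m s = s div q ^ m"
definition xx :: "nat \<Rightarrow> nat \<Rightarrow> nat \<Rightarrow> nat" where "xx q m s = s mod q ^ m"
definition xd :: "nat \<Rightarrow> nat \<Rightarrow> nat \<Rightarrow> nat \<Rightarrow> nat" where "xd q m s l = digit q (xx q m s) l"
definition Jd :: "nat \<Rightarrow> nat \<Rightarrow> nat \<Rightarrow> nat \<Rightarrow> nat \<Rightarrow> nat" where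
  "Jd q m s u l = (if l = u then (xd q m s u + tt q m s + 1) mod q else xd q m s l)"
definition Jf :: "nat \<Rightarrow> nat \<Rightarrow> nat \<Rightarrow> nat \<Rightarrow> nat" where
  "Jf q m s u = (if u < m then enc q m (Jd q m s u) else xx q m s)"
definition Vf :: "nat \<Rightarrow> nat \<Rightarrow> nat \<Rightarrow> nat \<Rightarrow> nat" where
  "Vf q m s u = (if u < m then xd q m s u else (sum (xd q m s) {..<m} + tt q m s + 1) mod q)"

lemma sdecomp: "s = tt q m s * q ^ m + xx q m s"
  unfolding tt_def xx_def using div_mult_mod_eq[of s "q^m"] by simp

context
  fixes q m s :: nat
  assumes q2: "2 \<le> q" and sS: "s < q ^ (m + 1) - q ^ m"
begin

lemma q0: "0 < q" using q2 by simp

lemma t_lt: "tt q m s + 1 < q"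
proof -
  have "q ^ (m + 1) - q ^ m = (q - 1) * q ^ m" by (simp add: diff_mult_distrib)
  then have "s < (q - 1) * q ^ m" using sS by simp
  then have "s div q ^ m < q - 1" by (simp add: div_less_iff_less_mult q0)
  then show ?thesis unfolding tt_def by simp
qed

lemma xx_lt: "xx q m s < q ^ m" unfolding xx_def using q0 by simp

lemma xd_lt: "xd q m s l < q" unfolding xd_def using digit_lt q0 by simp

lemma Jd_lt: "Jd q m s u l < q" unfolding Jd_def using xd_lt q0 by simp

lemma digit_Jf: "u < m \<Longrightarrow> l < m \<Longrightarrow> digit q (Jf q m s u) l = Jd q m s u l"
  unfolding Jf_def using enc_digit[of m "Jd q m s u" q l] Jd_lt by simp

lemma Jf_lt: "Jf q m s u < q ^ m"
  unfolding Jf_def using enc_lt[of m "Jd q m s u" q] Jd_lt xx_lt by simp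

lemma Vf_lt: "Vf q m s u < q" unfolding Vf_def using xd_lt q0 by simp

lemma K_lt: "u \<le> m \<Longrightarrow> u * q + Vf q m s u < q * (m + 1)"
proof -
  assume "u \<le> m"
  then have "u * q + Vf q m s u < u * q + q" using Vf_lt by simp
  also have "\<dots> = (u + 1) * q" by simp
  also have "\<dots> \<le> (m + 1) * q" using \<open>u \<le> m\<close> by (intro mult_le_mono1) simp
  finally show ?thesis by (simp add: mult.commute)
qed

lemma enc_xd: "enc q m (xd q m s) = xx q m s"
  unfolding xd_def using enc_of_digit[OF q0 xx_lt] .

lemma char_bwd: "u \<le> m \<Longrightarrow> arrA q m (Jf q m s u) (u * q + Vf q m s u) = Some s"
proof (cases "u < m")
  case True
  have V: "Vf q m s u = xd q m s u" using True unfolding Vf_def by simp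
  have dj: "digit q (Jf q m s u) u = (xd q m s u + tt q m s + 1) mod q"
    using digit_Jf[OF True True] unfolding Jd_def by simp
  have ne: "digit q (Jf q m s u) u \<noteq> xd q m s u"
    using dj mod_shift_ne[OF xd_lt t_lt] by simp
  have e: "enc q m (\<lambda>l. if l = u then xd q m s u else digit q (Jf q m s u) l) = xx q m s"
  proof -
    have "enc q m (\<lambda>l. if l = u then xd q m s u else digit q (Jf q m s u) l) = enc q m (xd q m s)"
      by (rule enc_cong) (simp add: digit_Jf True Jd_def)
    then show ?thesis using enc_xd by simp
  qed
  have T: "modq q (int (digit q (Jf q m s u) u) - int (xd q m s u) - 1) = tt q m s"
    using dj modq_back[of "tt q m s" q "xd q m s u"] t_lt by simp
  show ?thesis using True V ne e T arrA_uv[OF xd_lt, of m "Jf q m s u" u] sdecomp[of s q m] by simp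
next
  case False
  assume "u \<le> m"
  then have u: "u = m" using False by simp
  have J: "Jf q m s m = xx q m s" unfolding Jf_def by simp
  have V: "Vf q m s m = (sum (xd q m s) {..<m} + tt q m s + 1) mod q" unfolding Vf_def by simp
  define S where "S = sum (xd q m s) {..<m}"
  have S': "(\<Sum>l<m. digit q (xx q m s) l) = S" unfolding S_def xd_def by simp
  have ne: "modq q (int S) \<noteq> (S + tt q m s + 1) mod q"
  proof -
    have "(S mod q + tt q m s + 1) mod q \<noteq> S mod q" using mod_shift_ne[OF _ t_lt] q0 by simp
    moreover have "(S mod q + (tt q m s + 1)) mod q = (S + (tt q m s + 1)) mod q"
      by (rule mod_add_left_eq)
    ultimately show ?thesis by (simp add: modq_nat)
  qed
  have T: "modq q (int ((S + tt q m s + 1) mod q) - int S - 1) = tt q m s"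
    using modq_back[of "tt q m s" q S] t_lt by simp
  have e: "enc q m (digit q (xx q m s)) = xx q m s" using enc_xd unfolding xd_def by simp
  have V2: "Vf q m s m = (S + tt q m s + 1) mod q" using V unfolding S_def .
  have A: "arrA q m (xx q m s) (m * q + Vf q m s m) = (if modq q (int S) = Vf q m s m then None
     else Some (modq q (int (Vf q m s m) - int S - 1) * q ^ m + xx q m s))"
    using arrA_uv[OF Vf_lt, of m "xx q m s" m] S' e by simp
  have "arrA q m (xx q m s) (m * q + Vf q m s m) = Some s"
    unfolding A using ne T V2 sdecomp[of s q m] by simp
  then show ?thesis using u J by simp
qed

lemma char_fwd:
  assumes j: "j < q ^ m" and u: "u \<le> m" and v: "v < q" and A: "arrA q m j (u * q + v) = Some s"
  shows "j = Jf q m s u \<and> v = Vf q m s u"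
proof (cases "u < m")
  case True
  define d where "d = (\<lambda>l. if l = u then v else digit q j l)"
  define T where "T = modq q (int (digit q j u) - int v - 1)"
  have ne: "digit q j u \<noteq> v" and s: "s = T * q ^ m + enc q m d"
    using A arrA_uv[OF v, of m j u] True unfolding d_def T_def by (auto split: if_splits)
  have dl: "\<And>l. d l < q" unfolding d_def using v digit_lt q0 by simp
  have E: "enc q m d < q ^ m" using enc_lt dl by blast
  have tt: "tt q m s = T" unfolding tt_def s using E q0 by simp
  have xx: "xx q m s = enc q m d" unfolding xx_def s using E q0 by simp
  have xd: "\<And>l. l < m \<Longrightarrow> xd q m s l = d l" unfolding xd_def xx using enc_digit dl by blast
  have Vf: "Vf q m s u = v" unfolding Vf_def using True xd[OF True] d_def by simp
  have "Jf q m s u = enc q m (digit q j)"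
    unfolding Jf_def using True
  proof (simp, intro enc_cong)
    fix l assume l: "l < m"
    show "Jd q m s u l = digit q j l"
    proof (cases "l = u")
      case True
      then show ?thesis unfolding Jd_def tt xd[OF \<open>u<m\<close>] using modq_fwd[OF digit_lt[OF q0, of j u], of v]
        unfolding T_def d_def by simp
    next
      case False
      then show ?thesis unfolding Jd_def using xd[OF l] d_def by simp
    qed
  qed
  then have "Jf q m s u = j" using enc_of_digit[OF q0 j] by simp
  then show ?thesis using Vf by simp
next
  case False
  then have um: "u = m" using u by simp
  define S where "S = (\<Sum>l<m. digit q j l)"
  define T where "T = modq q (int v - int S - 1)"
  have ne: "modq q (int S) \<noteq> v" and s: "s = T * q ^ m + j"
    using A arrA_uv[OF v, of m j u] um enc_of_digit[OF q0 j] unfolding S_def T_def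
    by (auto split: if_splits simp del: of_nat_sum)
  have tt: "tt q m s = T" unfolding tt_def s using j q0 by simp
  have xx: "xx q m s = j" unfolding xx_def s using j q0 by simp
  have Jf: "Jf q m s u = j" unfolding Jf_def using um xx by simp
  have "Vf q m s u = (S + T + 1) mod q" unfolding Vf_def using um tt unfolding xd_def xx S_def by simp
  also have "\<dots> = v" unfolding T_def using modq_fwd[OF v] by simp
  finally show ?thesis using Jf by simp
qed

lemma Jf_ne: "u1 < m \<Longrightarrow> u2 \<le> m \<Longrightarrow> u1 \<noteq> u2 \<Longrightarrow> Jf q m s u1 \<noteq> Jf q m s u2"
proof
  assume h: "u1 < m" "u2 \<le> m" "u1 \<noteq> u2" "Jf q m s u1 = Jf q m s u2"
  have a: "digit q (Jf q m s u1) u1 = (xd q m s u1 + tt q m s + 1) mod q"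
    using digit_Jf[OF h(1) h(1)] unfolding Jd_def by simp
  have b: "digit q (Jf q m s u2) u1 = xd q m s u1"
  proof (cases "u2 < m")
    case True then show ?thesis using digit_Jf[OF True h(1)] h(3) unfolding Jd_def by simp
  next
    case False then show ?thesis unfolding Jf_def xd_def by simp
  qed
  have "(xd q m s u1 + tt q m s + 1) mod q = xd q m s u1" using a b h(4) by simp
  then show False using mod_shift_ne[OF xd_lt[of u1] t_lt] by simp
qed

lemma cross: "u1 \<le> m \<Longrightarrow> u2 \<le> m \<Longrightarrow> u1 \<noteq> u2 \<Longrightarrow> arrA q m (Jf q m s u1) (u2 * q + Vf q m s u2) = None"
proof (cases "u2 < m")
  case True
  assume h: "u1 \<le> m" "u2 \<le> m" "u1 \<noteq> u2"
  have b: "digit q (Jf q m s u1) u2 = xd q m s u2"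
  proof (cases "u1 < m")
    case True then show ?thesis using digit_Jf[OF True \<open>u2 < m\<close>] h(3) unfolding Jd_def by simp
  next
    case False then show ?thesis unfolding Jf_def xd_def by simp
  qed
  have V: "Vf q m s u2 = xd q m s u2" unfolding Vf_def using True by simp
  show ?thesis unfolding V using arrA_uv[OF xd_lt, of m "Jf q m s u1" u2] b True by simp
next
  case False
  assume h: "u1 \<le> m" "u2 \<le> m" "u1 \<noteq> u2"
  then have u2: "u2 = m" using False by simp
  then have u1: "u1 < m" using h by simp
  define R where "R = (\<Sum>l\<in>{..<m} - {u1}. xd q m s l)"
  have s1: "(\<Sum>l<m. digit q (Jf q m s u1) l) = (xd q m s u1 + tt q m s + 1) mod q + R"
  proof -
    have "(\<Sum>l<m. digit q (Jf q m s u1) l) = (\<Sum>l<m. Jd q m s u1 l)"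
      by (rule sum.cong) (auto simp: digit_Jf u1)
    also have "\<dots> = Jd q m s u1 u1 + (\<Sum>l\<in>{..<m} - {u1}. Jd q m s u1 l)"
      using u1 by (simp add: sum.remove)
    also have "(\<Sum>l\<in>{..<m} - {u1}. Jd q m s u1 l) = R"
      unfolding R_def by (rule sum.cong) (auto simp: Jd_def)
    finally show ?thesis unfolding Jd_def by simp
  qed
  have s2: "sum (xd q m s) {..<m} = xd q m s u1 + R"
    unfolding R_def using u1 by (simp add: sum.remove)
  have "modq q (int (\<Sum>l<m. digit q (Jf q m s u1) l)) = ((xd q m s u1 + tt q m s + 1) mod q + R) mod q"
    unfolding s1 modq_nat by (rule refl)
  also have "\<dots> = (xd q m s u1 + tt q m s + 1 + R) mod q"
    by (rule mod_add_left_eq)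
  also have "\<dots> = Vf q m s u2"
    unfolding Vf_def using u2 s2 by (simp add: ac_simps)
  finally have eq: "modq q (int (\<Sum>l<m. digit q (Jf q m s u1) l)) = Vf q m s u2" .
  show ?thesis using arrA_uv[OF Vf_lt, of m "Jf q m s u1" u2] u2 eq by (simp del: of_nat_sum)
qed

end


lemma bound_aux: "T + 1 < q \<Longrightarrow> E < q ^ m \<Longrightarrow> T * q ^ m + (E::nat) < q ^ (m + 1) - q ^ m"
proof -
  assume a: "T + 1 < q" "E < q ^ m"
  have "T * q ^ m + E < T * q ^ m + q ^ m" using a by simp
  also have "\<dots> = (T + 1) * q ^ m" by simp
  also have "\<dots> \<le> (q - 1) * q ^ m" using a by (intro mult_le_mono1) simp
  also have "\<dots> = q ^ (m + 1) - q ^ m" by (simp add: diff_mult_distrib)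
  finally show ?thesis .
qed

lemma range_lemma:
  assumes q2: "2 \<le> q" and v: "v < q" and A: "arrA q m j (u * q + v) = Some s"
  shows "s < q ^ (m + 1) - q ^ m"
proof (cases "u < m")
  case True
  define d where "d = (\<lambda>l. if l = u then v else digit q j l)"
  define T where "T = modq q (int (digit q j u) - int v - 1)"
  have ne: "digit q j u \<noteq> v" and s: "s = T * q ^ m + enc q m d"
    using A arrA_uv[OF v, of m j u] True unfolding d_def T_def by (auto split: if_splits)
  have dl: "\<And>l. d l < q" unfolding d_def using v digit_lt q2 by simp
  have E: "enc q m d < q ^ m" using enc_lt dl by blast
  have T: "T + 1 < q" unfolding T_def using modq_small[OF digit_lt v ne] q2 by simp
  show ?thesis unfolding s using bound_aux[OF T E] .
next
  case False
  define S where "S = (\<Sum>l<m. digit q j l)"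
  define T where "T = modq q (int v - int S - 1)"
  have ne: "modq q (int S) \<noteq> v" and s: "s = T * q ^ m + enc q m (digit q j)"
    using A arrA_uv[OF v, of m j u] False unfolding S_def T_def
    by (auto split: if_splits simp del: of_nat_sum)
  have ne2: "v \<noteq> S mod q" using ne by (simp add: modq_nat)
  have "(int v - 1 - int (S mod q)) mod int q = (int v - 1 - int S) mod int q"
    by (simp add: of_nat_mod mod_diff_right_eq)
  then have "T = modq q (int v - int (S mod q) - 1)" unfolding T_def modq_def by (simp add: algebra_simps)
  then have T: "T + 1 < q" using modq_small[OF v _ ne2] q2 by simp
  have dl: "\<And>l. digit q j l < q" using digit_lt q2 by simp
  have E: "enc q m (digit q j) < q ^ m" using enc_lt dl by blast
  show ?thesis unfolding s using bound_aux[OF T E] .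
qed

lemma enc_lt': "(\<And>l. d l < q) \<Longrightarrow> enc q m d < q ^ m"
  using enc_lt by blast

lemma enc_digit': "(\<And>l. d l < q) \<Longrightarrow> l < m \<Longrightarrow> digit q (enc q m d) l = d l"
  using enc_digit by blast

lemma count1:
  assumes q0: "0 < q" and u: "u < m" and v: "v < q"
  shows "card {j. j < q ^ m \<and> digit q j u = v} = q ^ (m - 1)"
proof -
  define f where "f j = enc q (m - 1) (\<lambda>l. if l < u then digit q j l else digit q j (Suc l))" for j
  define g where "g y = enc q m (\<lambda>l. if l < u then digit q y l else if l = u then v else digit q y (l - 1))" for y
  have dl: "\<And>j l. digit q j l < q" using digit_lt q0 by simp
  have gd: "\<And>y l. (if l < u then digit q y l else if l = u then v else digit q y (l - 1)) < q"
    using dl v by simp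
  have fd: "\<And>j l. (if l < u then digit q j l else digit q j (Suc l)) < q" using dl by simp
  have "bij_betw f {j. j < q ^ m \<and> digit q j u = v} {..<q ^ (m - 1)}"
  proof (rule bij_betw_byWitness[where f' = g])
    show "\<forall>a\<in>{j. j < q ^ m \<and> digit q j u = v}. g (f a) = a"
    proof
      fix a assume a: "a \<in> {j. j < q ^ m \<and> digit q j u = v}"
      show "g (f a) = a"
      proof (rule digit_eq_imp_eq[OF q0])
        show "g (f a) < q ^ m" unfolding g_def by (rule enc_lt') (rule gd)
        show "a < q ^ m" using a by simp
        fix l assume l: "l < m"
        have e1: "digit q (g (f a)) l = (if l < u then digit q (f a) l else if l = u then v else digit q (f a) (l - 1))"
          unfolding g_def by (rule enc_digit'[OF gd l])
        have e2: "\<And>i. i < m - 1 \<Longrightarrow> digit q (f a) i = (if i < u then digit q a i else digit q a (Suc i))"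
          unfolding f_def by (rule enc_digit'[OF fd])
        show "digit q (g (f a)) l = digit q a l"
        proof (cases "l < u")
          case True then show ?thesis using e1 e2[of l] u by simp
        next
          case False
          show ?thesis
          proof (cases "l = u")
            case True then show ?thesis using e1 a by simp
          next
            case False
            then have "l - 1 < m - 1" "\<not> l - 1 < u" "Suc (l - 1) = l" using \<open>\<not> l < u\<close> l False by simp_all
            then show ?thesis using e1 e2[of "l - 1"] False \<open>\<not> l < u\<close> by simp
          qed
        qed
      qed
    qed
    show "\<forall>a'\<in>{..<q ^ (m - 1)}. f (g a') = a'"
    proof
      fix b assume b: "b \<in> {..<q ^ (m - 1)}"
      show "f (g b) = b"
      proof (rule digit_eq_imp_eq[OF q0])
        show "f (g b) < q ^ (m - 1)" unfolding f_def by (rule enc_lt') (rule fd)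
        show "b < q ^ (m - 1)" using b by simp
        fix l assume l: "l < m - 1"
        have e1: "digit q (f (g b)) l = (if l < u then digit q (g b) l else digit q (g b) (Suc l))"
          unfolding f_def by (rule enc_digit'[OF fd l])
        have e2: "\<And>i. i < m \<Longrightarrow> digit q (g b) i = (if i < u then digit q b i else if i = u then v else digit q b (i - 1))"
          unfolding g_def by (rule enc_digit'[OF gd])
        show "digit q (f (g b)) l = digit q b l"
        proof (cases "l < u")
          case True then show ?thesis using e1 e2[of l] u by simp
        next
          case False
          then show ?thesis using e1 e2[of "Suc l"] l by simp
        qed
      qed
    qed
    show "f ` {j. j < q ^ m \<and> digit q j u = v} \<subseteq> {..<q ^ (m - 1)}"
    proof
      fix x assume "x \<in> f ` {j. j < q ^ m \<and> digit q j u = v}"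
      then obtain y where x: "x = f y" by blast
      have "x < q ^ (m - 1)" unfolding x f_def by (rule enc_lt') (rule fd)
      then show "x \<in> {..<q ^ (m - 1)}" by simp
    qed
    show "g ` {..<q ^ (m - 1)} \<subseteq> {j. j < q ^ m \<and> digit q j u = v}"
    proof
      fix x assume "x \<in> g ` {..<q ^ (m - 1)}"
      then obtain y where x: "x = g y" by blast
      have "x < q ^ m" unfolding x g_def by (rule enc_lt'[OF gd])
      moreover have "digit q x u = v" unfolding x g_def using enc_digit'[OF gd u] by simp
      ultimately show "x \<in> {j. j < q ^ m \<and> digit q j u = v}" by simp
    qed
  qed
  then show ?thesis by (simp add: bij_betw_same_card)
qed


lemma aux_inv1: "0 < q \<Longrightarrow> modq q (int (S + d)) = v \<Longrightarrow> d < q \<Longrightarrow> modq q (int v - int S) = d"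
proof -
  assume q0: "0 < q" and h: "modq q (int (S + d)) = v" and d: "d < q"
  have iv: "int v = (int S + int d) mod int q" using h int_modq[OF q0, of "int (S + d)"] by simp
  have "(int v - int S) mod int q = ((int S + int d) mod int q - int S) mod int q" using iv by simp
  also have "\<dots> = (int S + int d - int S) mod int q" by (rule mod_diff_left_eq)
  also have "\<dots> = int d" using d by simp
  finally show ?thesis unfolding modq_def by simp
qed

lemma aux_inv2: "v < q \<Longrightarrow> modq q (int (S + modq q (int v - int S))) = v"
proof -
  assume v: "v < q"
  then have q0: "0 < q" by simp
  have "int (S + modq q (int v - int S)) = int S + (int v - int S) mod int q" using int_modq[OF q0] by simp
  then have "int (S + modq q (int v - int S)) mod int q = (int S + (int v - int S) mod int q) mod int q" by simp
  also have "\<dots> = (int S + (int v - int S)) mod int q" by (rule mod_add_right_eq)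
  also have "\<dots> = int v" using v by simp
  finally show ?thesis unfolding modq_def by simp
qed

lemma count2_Suc:
  assumes q0: "0 < q" and v: "v < q"
  shows "card {j. j < q ^ Suc n \<and> modq q (int (\<Sum>l<Suc n. digit q j l)) = v} = q ^ n"
proof -
  define A where "A = {j. j < q ^ Suc n \<and> modq q (int (\<Sum>l<Suc n. digit q j l)) = v}"
  define f where "f j = enc q n (digit q j)" for j
  define g where "g y = enc q (Suc n) (\<lambda>l. if l < n then digit q y l else modq q (int v - int (\<Sum>l<n. digit q y l)))" for y
  have dl: "\<And>j l. digit q j l < q" using digit_lt q0 by simp
  have gd: "\<And>y l. (if l < n then digit q y l else modq q (int v - int (\<Sum>l<n. digit q y l))) < q"
    using dl modq_lt[OF q0] by simp
  have "bij_betw f A {..<q ^ n}"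
  proof (rule bij_betw_byWitness[where f' = g])
    show "\<forall>a\<in>A. g (f a) = a"
    proof
      fix a assume a: "a \<in> A"
      show "g (f a) = a"
      proof (rule digit_eq_imp_eq[OF q0])
        show "g (f a) < q ^ Suc n" unfolding g_def by (rule enc_lt') (rule gd)
        show "a < q ^ Suc n" using a A_def by simp
        fix l assume l: "l < Suc n"
        have e1: "digit q (g (f a)) l = (if l < n then digit q (f a) l else modq q (int v - int (\<Sum>l<n. digit q (f a) l)))"
          unfolding g_def by (rule enc_digit'[OF gd l])
        have e2: "\<And>i. i < n \<Longrightarrow> digit q (f a) i = digit q a i"
          unfolding f_def by (rule enc_digit'[OF dl])
        show "digit q (g (f a)) l = digit q a l"
        proof (cases "l < n")
          case True then show ?thesis using e1 e2[of l] by simp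
        next
          case False
          then have ln: "l = n" using l by simp
          have S: "(\<Sum>l<n. digit q (f a) l) = (\<Sum>l<n. digit q a l)" by (rule sum.cong) (auto simp: e2)
          have "modq q (int ((\<Sum>l<n. digit q a l) + digit q a n)) = v" using a unfolding A_def by simp
          then have "modq q (int v - int (\<Sum>l<n. digit q a l)) = digit q a n"
            using aux_inv1[OF q0 _ dl] by blast
          then show ?thesis using e1 ln S by simp
        qed
      qed
    qed
    show "\<forall>a'\<in>{..<q ^ n}. f (g a') = a'"
    proof
      fix b assume b: "b \<in> {..<q ^ n}"
      show "f (g b) = b"
      proof (rule digit_eq_imp_eq[OF q0])
        show "f (g b) < q ^ n" unfolding f_def by (rule enc_lt') (rule dl)
        show "b < q ^ n" using b by simp
        fix l assume l: "l < n"
        have e1: "digit q (f (g b)) l = digit q (g b) l"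
          unfolding f_def by (rule enc_digit'[OF dl l])
        have e2': "digit q (g b) l = (if l < n then digit q b l else modq q (int v - int (\<Sum>l<n. digit q b l)))"
          unfolding g_def by (rule enc_digit'[OF gd]) (use l in simp)
        have e2: "digit q (g b) l = digit q b l" using e2' l by simp
        show "digit q (f (g b)) l = digit q b l" using e1 e2 by simp
      qed
    qed
    show "f ` A \<subseteq> {..<q ^ n}"
    proof
      fix x assume "x \<in> f ` A"
      then obtain y where x: "x = f y" by blast
      have "x < q ^ n" unfolding x f_def by (rule enc_lt') (rule dl)
      then show "x \<in> {..<q ^ n}" by simp
    qed
    show "g ` {..<q ^ n} \<subseteq> A"
    proof
      fix x assume "x \<in> g ` {..<q ^ n}"
      then obtain y where x: "x = g y" by blast
      have lt: "x < q ^ Suc n" unfolding x g_def by (rule enc_lt'[OF gd])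
      have dx: "\<And>l. l < Suc n \<Longrightarrow> digit q x l = (if l < n then digit q y l else modq q (int v - int (\<Sum>l<n. digit q y l)))"
        unfolding x g_def by (rule enc_digit'[OF gd])
      have "(\<Sum>l<Suc n. digit q x l) = (\<Sum>l<n. digit q x l) + digit q x n" by simp
      also have "(\<Sum>l<n. digit q x l) = (\<Sum>l<n. digit q y l)" by (rule sum.cong) (auto simp: dx)
      also have "digit q x n = modq q (int v - int (\<Sum>l<n. digit q y l))" using dx[of n] by simp
      finally have sx: "(\<Sum>l<Suc n. digit q x l) = (\<Sum>l<n. digit q y l) + modq q (int v - int (\<Sum>l<n. digit q y l))" .
      have "modq q (int (\<Sum>l<Suc n. digit q x l)) = v" unfolding sx by (rule aux_inv2[OF v])
      then show "x \<in> A" unfolding A_def using lt by simp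
    qed
  qed
  then show ?thesis unfolding A_def by (simp add: bij_betw_same_card)
qed



lemma kdec: "0 < (q::nat) \<Longrightarrow> k < q * (m + 1) \<Longrightarrow> k div q \<le> m \<and> k = k div q * q + k mod q \<and> k mod q < q"
proof -
  assume q0: "0 < q" and k: "k < q * (m + 1)"
  have "k < (m + 1) * q" using k by (simp add: mult.commute)
  then have "k div q < m + 1" by (rule less_mult_imp_div_less)
  then show ?thesis using q0 by simp
qed

theorem theorem4:
  fixes q m :: nat
  assumes "q \<ge> 2" and "m \<ge> 1"
  shows "is_regular_PDA (m + 1) (q * (m + 1)) (q ^ m) (q ^ (m - 1)) (q ^ (m + 1) - q ^ m) (arrA q m)
         \<and> PDA_rate (q ^ m) (q ^ (m + 1) - q ^ m) = real q - 1"
proof -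
  have q2: "2 \<le> q" using assms by simp
  have q0: "0 < q" using q2 by simp
  have Spos: "0 < q ^ (m + 1) - q ^ m"
  proof -
    have "q ^ m < q * q ^ m" using q2 by simp
    then show ?thesis by simp
  qed
  have range: "\<forall>j<q ^ m. \<forall>k<q * (m + 1). \<forall>s. arrA q m j k = Some s \<longrightarrow> s < q ^ (m + 1) - q ^ m"
  proof (intro allI impI)
    fix j k s assume j: "j < q ^ m" and k: "k < q * (m + 1)" and A: "arrA q m j k = Some s"
    have kd: "k = k div q * q + k mod q" "k mod q < q" using kdec[OF q0 k] by auto
    show "s < q ^ (m + 1) - q ^ m" using range_lemma[OF q2 kd(2), of m j "k div q" s] A kd(1) by simp
  qed
  have col: "\<forall>k<q * (m + 1). card {j. j < q ^ m \<and> arrA q m j k = None} = q ^ (m - 1)"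
  proof (intro allI impI)
    fix k assume k: "k < q * (m + 1)"
    define u where "u = k div q"
    define v where "v = k mod q"
    have um: "u \<le> m" and kk: "k = u * q + v" and v: "v < q" using kdec[OF q0 k] unfolding u_def v_def by auto
    show "card {j. j < q ^ m \<and> arrA q m j k = None} = q ^ (m - 1)"
    proof (cases "u < m")
      case True
      have "{j. j < q ^ m \<and> arrA q m j k = None} = {j. j < q ^ m \<and> digit q j u = v}"
      proof (rule Collect_cong)
        fix j show "(j < q ^ m \<and> arrA q m j k = None) = (j < q ^ m \<and> digit q j u = v)"
          unfolding kk using arrA_uv[OF v, of m j u] True by simp
      qed
      then show ?thesis using count1[OF q0 True v] by simp
    next
      case False
      then have u: "u = m" using um by simp
      obtain n where n: "m = Suc n" using assms(2) by (cases m) auto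
      have "{j. j < q ^ m \<and> arrA q m j k = None} = {j. j < q ^ Suc n \<and> modq q (int (\<Sum>l<Suc n. digit q j l)) = v}"
      proof (rule Collect_cong)
        fix j show "(j < q ^ m \<and> arrA q m j k = None) = (j < q ^ Suc n \<and> modq q (int (\<Sum>l<Suc n. digit q j l)) = v)"
          unfolding kk using arrA_uv[OF v, of m j u] u n by (simp del: of_nat_sum)
      qed
      then show ?thesis using count2_Suc[OF q0 v, of n] n by simp
    qed
  qed
  have reg: "\<forall>s<q ^ (m + 1) - q ^ m. card {(j, k). j < q ^ m \<and> k < q * (m + 1) \<and> arrA q m j k = Some s} = m + 1"
  proof (intro allI impI)
    fix s assume sS: "s < q ^ (m + 1) - q ^ m"
    have eq: "{(j, k). j < q ^ m \<and> k < q * (m + 1) \<and> arrA q m j k = Some s}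
        = (\<lambda>u. (Jf q m s u, u * q + Vf q m s u)) ` {..m}"
    proof (rule set_eqI, rule iffI)
      fix p assume "p \<in> {(j, k). j < q ^ m \<and> k < q * (m + 1) \<and> arrA q m j k = Some s}"
      then obtain j k where p: "p = (j, k)" and j: "j < q ^ m" and k: "k < q * (m + 1)" and A: "arrA q m j k = Some s"
        by blast
      have kd: "k div q \<le> m" "k = k div q * q + k mod q" "k mod q < q" using kdec[OF q0 k] by auto
      have "j = Jf q m s (k div q) \<and> k mod q = Vf q m s (k div q)"
        using char_fwd[OF q2 sS j kd(1) kd(3)] A kd(2) by simp
      then have "p = (Jf q m s (k div q), k div q * q + Vf q m s (k div q))" using p kd(2) by simp
      then show "p \<in> (\<lambda>u. (Jf q m s u, u * q + Vf q m s u)) ` {..m}" using kd(1) by blast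
    next
      fix p assume "p \<in> (\<lambda>u. (Jf q m s u, u * q + Vf q m s u)) ` {..m}"
      then obtain u where u: "u \<le> m" and p: "p = (Jf q m s u, u * q + Vf q m s u)" by auto
      show "p \<in> {(j, k). j < q ^ m \<and> k < q * (m + 1) \<and> arrA q m j k = Some s}"
        using p Jf_lt[OF q2 sS, of u] K_lt[OF q2 sS u] char_bwd[OF q2 sS u] by simp
    qed
    have inj: "inj_on (\<lambda>u. (Jf q m s u, u * q + Vf q m s u)) {..m}"
    proof (rule inj_onI)
      fix a b assume "(Jf q m s a, a * q + Vf q m s a) = (Jf q m s b, b * q + Vf q m s b)"
      then have "(a * q + Vf q m s a) div q = (b * q + Vf q m s b) div q" by simp
      then show "a = b" using Vf_lt[OF q2 sS] q0 by simp
    qed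
    show "card {(j, k). j < q ^ m \<and> k < q * (m + 1) \<and> arrA q m j k = Some s} = m + 1"
      unfolding eq using card_image[OF inj] by simp
  qed
  have c3: "\<forall>j1<q ^ m. \<forall>k1<q * (m + 1). \<forall>j2<q ^ m. \<forall>k2<q * (m + 1). \<forall>s.
        arrA q m j1 k1 = Some s \<and> arrA q m j2 k2 = Some s \<and> (j1, k1) \<noteq> (j2, k2) \<longrightarrow>
        j1 \<noteq> j2 \<and> k1 \<noteq> k2 \<and> arrA q m j1 k2 = None \<and> arrA q m j2 k1 = None"
  proof (intro allI impI)
    fix j1 k1 j2 k2 s
    assume j1: "j1 < q ^ m" and k1: "k1 < q * (m + 1)" and j2: "j2 < q ^ m" and k2: "k2 < q * (m + 1)"
      and H: "arrA q m j1 k1 = Some s \<and> arrA q m j2 k2 = Some s \<and> (j1, k1) \<noteq> (j2, k2)"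
    have sS: "s < q ^ (m + 1) - q ^ m" using range[rule_format, OF j1 k1] H by blast
    have kd1: "k1 div q \<le> m" "k1 = k1 div q * q + k1 mod q" "k1 mod q < q" using kdec[OF q0 k1] by auto
    have kd2: "k2 div q \<le> m" "k2 = k2 div q * q + k2 mod q" "k2 mod q < q" using kdec[OF q0 k2] by auto
    define u1 where "u1 = k1 div q"
    define u2 where "u2 = k2 div q"
    have c1: "j1 = Jf q m s u1 \<and> k1 mod q = Vf q m s u1"
      using char_fwd[OF q2 sS j1 kd1(1) kd1(3)] H kd1(2) unfolding u1_def by simp
    have c2: "j2 = Jf q m s u2 \<and> k2 mod q = Vf q m s u2"
      using char_fwd[OF q2 sS j2 kd2(1) kd2(3)] H kd2(2) unfolding u2_def by simp
    have K1: "k1 = u1 * q + Vf q m s u1" using c1 kd1(2) unfolding u1_def by simp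
    have K2: "k2 = u2 * q + Vf q m s u2" using c2 kd2(2) unfolding u2_def by simp
    have ne: "u1 \<noteq> u2"
    proof
      assume "u1 = u2"
      then have "j1 = j2" "k1 = k2" using c1 c2 K1 K2 by simp_all
      then show False using H by simp
    qed
    have u1m: "u1 \<le> m" and u2m: "u2 \<le> m" using kd1(1) kd2(1) unfolding u1_def u2_def by auto
    have "j1 \<noteq> j2"
    proof (cases "u1 < m")
      case True then show ?thesis using Jf_ne[OF q2 sS True u2m ne] c1 c2 by simp
    next
      case False
      then have "u2 < m" using ne u1m u2m by simp
      then show ?thesis using Jf_ne[OF q2 sS _ u1m] ne c1 c2 by metis
    qed
    moreover have "k1 \<noteq> k2" using ne unfolding u1_def u2_def by auto
    moreover have "arrA q m j1 k2 = None" using cross[OF q2 sS u1m u2m ne] c1 K2 by simp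
    moreover have "arrA q m j2 k1 = None" using cross[OF q2 sS u2m u1m] ne c2 K1 by simp
    ultimately show "j1 \<noteq> j2 \<and> k1 \<noteq> k2 \<and> arrA q m j1 k2 = None \<and> arrA q m j2 k1 = None" by simp
  qed
  have pda: "is_regular_PDA (m + 1) (q * (m + 1)) (q ^ m) (q ^ (m - 1)) (q ^ (m + 1) - q ^ m) (arrA q m)"
    unfolding is_regular_PDA_def
  proof (intro conjI)
    show "0 < q * (m + 1)" using q0 by simp
    show "0 < q ^ m" using q0 by simp
    show "0 < q ^ (m - 1)" using q0 by simp
  qed (fact Spos range col reg c3)+
  have le: "q ^ m \<le> q ^ (m + 1)" using q0 by simp
  have "real (q ^ (m + 1) - q ^ m) = real q * real q ^ m - real q ^ m"
    using le by (simp add: of_nat_diff)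
  then have "PDA_rate (q ^ m) (q ^ (m + 1) - q ^ m) = (real q * real q ^ m - real q ^ m) / real q ^ m"
    unfolding PDA_rate_def by simp
  also have "\<dots> = real q - 1" using q0 by (simp add: field_simps)
  finally have r: "PDA_rate (q ^ m) (q ^ (m + 1) - q ^ m) = real q - 1" .
  show ?thesis using pda r by (rule conjI)
qed

end
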